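(* Let $p\ge3$, $d_j>0$, $\gamma_j\ge0$ ($j=1,\ldots,p$), with indices sorted so that $d_1^2/(d_1+\gamma_1)\ge\cdots\ge d_p^2/(d_p+\gamma_p)$, and for $3\le k\le p$ let \[ M_k=\frac{(k-2)^2}{\sum_{j=1}^k (d_j+\gamma_j)/d_j^2}+\sum_{j=k+1}^p\frac{d_j^2}{d_j+\gamma_j}. \] Then the sequence $(M_3,M_4,\ldots,M_p)$ is nonincreasing: for $3\le k\le p-1$, $M_k\ge M_{k+1}$, with equality if and only if \[ \frac{k-2}{\sum_{j=1}^k (d_j+\gamma_j)/d_j^2}=\frac{d_{k+1}^2}{d_{k+1}+\gamma_{k+1}}. \] Furthermore, let $A^\dagger=\operatorname{diag}(a_1^\dagger,\ldots,a_p^\dagger)$ be the unique maximizer of $\sum_j d_ja_j-2\max_j d_ja_j$ over $a_j\ge0$ with $\sum_j(d_j+\gamma_j)a_j^2=\sum_j d_j^2/(d_j+\gamma_j)$, and let $\nu$ be the largest index with $d_\nu a_\nu^\dagger=\max_j d_ja_j^\dagger$. If $\nu\le p-1$, then the condition $d_\nu a_\nu^\dagger>d_{\nu+1}a_{\nu+1}^\dagger$ is equivalent to \[ \frac{\nu-2}{\sum_{j=1}^\nu (d_j+\gamma_j)/d_j^2}>\frac{d_{\nu+1}^2}{d_{\nu+1}+\gamma_{\nu+1}}; \] consequently $\nu$ is the smallest index $k$ with $3\le k\le p-1$ such that $\frac{k-2}{\sum_{j=1}^k (d_j+\gamma_j)/d_j^2}>\frac{d_{k+1}^2}{d_{k+1}+\gamma_{k+1}}$,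 and $M_\nu>M_{\nu+1}$.
   Context: The maximizer $A^\dagger$ exists and is unique; $\nu\ge3$. *)

theory Defs
  imports Complex_Main
begin

text \<open>Indices run over 1..p; d, gamma, a are functions nat => real (values outside 1..p irrelevant).\<close>

definition rr :: "(nat \<Rightarrow> real) \<Rightarrow> (nat \<Rightarrow> real) \<Rightarrow> nat \<Rightarrow> real" where
  "rr d g j = (d j)^2 / (d j + g j)"

definition Mk :: "(nat \<Rightarrow> real) \<Rightarrow> (nat \<Rightarrow> real) \<Rightarrow> nat \<Rightarrow> nat \<Rightarrow> real" where
  "Mk d g p k = (real k - 2)^2 / (\<Sum>j=1..k. (d j + g j) / (d j)^2)
               + (\<Sum>j=k+1..p. (d j)^2 / (d j + g j))"

definition cond :: "(nat \<Rightarrow> real) \<Rightarrow> (nat \<Rightarrow> real) \<Rightarrow> nat \<Rightarrow> real" where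
  "cond d g k = (real k - 2) / (\<Sum>j=1..k. (d j + g j) / (d j)^2)"

definition feasible :: "(nat \<Rightarrow> real) \<Rightarrow> (nat \<Rightarrow> real) \<Rightarrow> nat \<Rightarrow> (nat \<Rightarrow> real) \<Rightarrow> bool" where
  "feasible d g p a \<longleftrightarrow> (\<forall>j\<in>{1..p}. a j \<ge> 0) \<and>
     (\<Sum>j=1..p. (d j + g j) * (a j)^2) = (\<Sum>j=1..p. (d j)^2 / (d j + g j))"

definition obj :: "(nat \<Rightarrow> real) \<Rightarrow> nat \<Rightarrow> (nat \<Rightarrow> real) \<Rightarrow> real" where
  "obj d p a = (\<Sum>j=1..p. d j * a j) - 2 * Max ((\<lambda>j. d j * a j) ` {1..p})"

definition is_maximizer :: "(nat \<Rightarrow> real) \<Rightarrow> (nat \<Rightarrow> real) \<Rightarrow> nat \<Rightarrow> (nat \<Rightarrow> real) \<Rightarrow> bool" where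
  "is_maximizer d g p a \<longleftrightarrow> feasible d g p a \<and> (\<forall>b. feasible d g p b \<longrightarrow> obj d p b \<le> obj d p a)"

end

theory Submission
  imports Defs
begin


lemma part1:
  fixes d g :: "nat \<Rightarrow> real"
  assumes k3: "3 \<le> k" and kp: "k \<le> p - 1"
    and hd: "\<forall>j\<in>{1..p}. d j > 0"
    and hg: "\<forall>j\<in>{1..p}. g j \<ge> 0"
  shows "Mk d g p k \<ge> Mk d g p (k+1) \<and>
            (Mk d g p k = Mk d g p (k+1) \<longleftrightarrow> cond d g k = rr d g (k+1))"
proof -
  define S where "S = (\<Sum>j=1..k. (d j + g j) / (d j)^2)"
  define x where "x = (d (k+1) + g (k+1)) / (d (k+1))^2"
  define T where "T = (\<Sum>j=Suc (k+1)..p. (d j)^2 / (d j + g j))"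
  have pos: "\<And>j. j \<in> {1..p} \<Longrightarrow> (d j + g j) / (d j)^2 > 0"
    using hd hg by (metis add_pos_nonneg divide_pos_pos zero_less_power)
  have Spos: "S > 0" unfolding S_def
    by (rule sum_pos) (use k3 kp pos in auto)
  have xpos: "x > 0" unfolding x_def using pos[of "k+1"] k3 kp by auto
  have rx: "(d (k+1))^2 / (d (k+1) + g (k+1)) = 1/x"
    unfolding x_def by simp
  have S1: "(\<Sum>j=1..k+1. (d j + g j) / (d j)^2) = S + x"
    unfolding S_def x_def by simp
  have T1: "(\<Sum>j=k+1..p. (d j)^2 / (d j + g j)) = 1/x + T"
    unfolding T_def using kp k3 rx by (subst sum.atLeast_Suc_atMost) auto
  have M1: "Mk d g p k = (real k - 2)^2 / S + 1/x + T"
    unfolding Mk_def S_def[symmetric] T1 by simp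
  have M2: "Mk d g p (k+1) = (real k - 1)^2 / (S + x) + T"
    unfolding Mk_def S1 T_def by (simp add: algebra_simps)
  have key: "Mk d g p k - Mk d g p (k+1) = ((real k - 2)*x - S)^2 / (S*x*(S+x))"
    unfolding M1 M2 using Spos xpos
    by (simp add: field_simps power2_eq_square)
  have den: "S*x*(S+x) > 0" using Spos xpos by simp
  have c: "cond d g k = (real k - 2)/S" unfolding cond_def S_def by simp
  have r: "rr d g (k+1) = 1/x" unfolding rr_def using rx by simp
  show ?thesis
  proof
    show "Mk d g p k \<ge> Mk d g p (k+1)" using key den
      by (metis diff_ge_0_iff_ge divide_nonneg_pos zero_le_power2)
    have "Mk d g p k = Mk d g p (k+1) \<longleftrightarrow> ((real k - 2)*x - S)^2 = 0"
      using key den by (metis divide_eq_0_iff eq_iff_diff_eq_0 less_irrefl)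
    also have "\<dots> \<longleftrightarrow> (real k - 2)/S = 1/x"
      using Spos xpos by (auto simp: field_simps)
    finally show "Mk d g p k = Mk d g p (k+1) \<longleftrightarrow> cond d g k = rr d g (k+1)"
      using c r by simp
  qed
qed


lemma Max_scale:
  fixes S :: "real set"
  assumes "finite S" "S \<noteq> {}" "c \<ge> 0"
  shows "Max ((\<lambda>y. c*y) ` S) = c * Max S"
proof (rule Max_eqI)
  show "finite ((\<lambda>y. c*y) ` S)" using assms by simp
  show "c * Max S \<in> (\<lambda>y. c*y) ` S" using assms by (intro imageI Max_in)
  fix y assume "y \<in> (\<lambda>y. c*y) ` S"
  then obtain z where "z \<in> S" "y = c*z" by auto
  then show "y \<le> c * Max S" using assms by (simp add: mult_left_mono)
qed

lemma obj_scale: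
  assumes "c \<ge> 0" "p \<ge> 1"
  shows "obj d p (\<lambda>j. c * x j) = c * obj d p x"
proof -
  have "(\<lambda>j. d j * (c * x j)) ` {1..p} = (\<lambda>y. c*y) ` ((\<lambda>j. d j * x j) ` {1..p})"
    by (auto simp: image_image algebra_simps)
  then have "Max ((\<lambda>j. d j * (c * x j)) ` {1..p}) = c * Max ((\<lambda>j. d j * x j) ` {1..p})"
    using Max_scale[of "(\<lambda>j. d j * x j) ` {1..p}" c] assms by simp
  moreover have "(\<Sum>j=1..p. d j * (c * x j)) = c * (\<Sum>j=1..p. d j * x j)"
    by (simp add: sum_distrib_left algebra_simps)
  ultimately show ?thesis unfolding obj_def by (simp add: algebra_simps)
qed

lemma homog:
  fixes d g a x :: "nat \<Rightarrow> real"
  assumes max: "is_maximizer d g p a" and p1: "p \<ge> 1"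
    and hd: "\<forall>j\<in>{1..p}. d j > 0"
    and hg: "\<forall>j\<in>{1..p}. g j \<ge> 0"
    and xnn: "\<forall>j\<in>{1..p}. x j \<ge> 0"
    and qpos: "(\<Sum>j=1..p. (d j + g j) * (x j)^2) > 0"
  shows "sqrt ((\<Sum>j=1..p. (d j)^2 / (d j + g j)) / (\<Sum>j=1..p. (d j + g j) * (x j)^2))
           * obj d p x \<le> obj d p a"
proof -
  define R where "R = (\<Sum>j=1..p. (d j)^2 / (d j + g j))"
  define q where "q = (\<Sum>j=1..p. (d j + g j) * (x j)^2)"
  define c where "c = sqrt (R / q)"
  have R0: "R \<ge> 0" unfolding R_def
    by (rule sum_nonneg) (use hd hg in \<open>auto intro!: divide_nonneg_pos add_pos_nonneg\<close>)
  have q0: "q > 0" using qpos q_def by simp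
  have Rq: "R / q \<ge> 0" using R0 q0 by simp
  have c0: "c \<ge> 0" unfolding c_def using Rq by simp
  have c2: "c^2 = R / q" unfolding c_def using Rq by (rule real_sqrt_pow2)
  have "feasible d g p (\<lambda>j. c * x j)"
    unfolding feasible_def
  proof
    show "\<forall>j\<in>{1..p}. 0 \<le> c * x j" using c0 xnn by simp
    have "(\<Sum>j=1..p. (d j + g j) * (c * x j)^2) = c^2 * q"
      unfolding q_def by (simp add: sum_distrib_left power_mult_distrib algebra_simps)
    also have "\<dots> = R" using c2 q0 by simp
    finally show "(\<Sum>j=1..p. (d j + g j) * (c * x j)^2) = (\<Sum>j=1..p. (d j)^2 / (d j + g j))"
      unfolding R_def .
  qed
  then have "obj d p (\<lambda>j. c * x j) \<le> obj d p a" using max unfolding is_maximizer_def by blast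
  then show ?thesis using obj_scale[OF c0 p1] unfolding c_def R_def q_def by simp
qed

lemma sq_ineq:
  fixes d g a x :: "nat \<Rightarrow> real"
  assumes max: "is_maximizer d g p a" and p1: "p \<ge> 1"
    and hd: "\<forall>j\<in>{1..p}. d j > 0"
    and hg: "\<forall>j\<in>{1..p}. g j \<ge> 0"
    and xnn: "\<forall>j\<in>{1..p}. x j \<ge> 0"
    and o0: "obj d p x \<ge> 0" and oa: "obj d p a \<ge> 0"
  shows "(obj d p x)^2 * (\<Sum>j=1..p. (d j)^2 / (d j + g j))
         \<le> (obj d p a)^2 * (\<Sum>j=1..p. (d j + g j) * (x j)^2)"
proof -
  define R where "R = (\<Sum>j=1..p. (d j)^2 / (d j + g j))"
  define q where "q = (\<Sum>j=1..p. (d j + g j) * (x j)^2)"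
  have R0: "R \<ge> 0" unfolding R_def
    by (rule sum_nonneg) (use hd hg in \<open>auto intro!: divide_nonneg_pos add_pos_nonneg\<close>)
  have q0: "q \<ge> 0" unfolding q_def
    by (rule sum_nonneg) (use hd hg in \<open>force intro!: mult_nonneg_nonneg add_nonneg_nonneg\<close>)
  show ?thesis
  proof (cases "q = 0")
    case True
    have nn: "\<forall>j\<in>{1..p}. 0 \<le> (d j + g j) * (x j)^2" using hd hg
        by (metis add_pos_nonneg less_imp_le mult_nonneg_nonneg zero_le_power2)
    have "\<forall>j\<in>{1..p}. (d j + g j) * (x j)^2 = 0"
      using True sum_nonneg_eq_0_iff[of "{1..p}" "\<lambda>j. (d j + g j) * (x j)^2"] nn
      unfolding q_def by simp
    then have x0: "\<forall>j\<in>{1..p}. x j = 0" using hd hg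
      by (metis add_pos_nonneg mult_eq_0_iff order_less_irrefl power_eq_0_iff)
    have "(\<lambda>j. d j * x j) ` {1..p} = {0}" using x0 p1 by auto
    moreover have "(\<Sum>j=1..p. d j * x j) = 0" using x0 by simp
    ultimately have "obj d p x = 0" unfolding obj_def by simp
    then show ?thesis using True q_def by simp
  next
    case False
    then have qp: "q > 0" using q0 by simp
    have h: "sqrt (R / q) * obj d p x \<le> obj d p a"
      using homog[OF max p1 hd hg xnn] qp unfolding R_def q_def by simp
    have "(sqrt (R / q) * obj d p x)^2 \<le> (obj d p a)^2"
      using h o0 R0 qp by (intro power_mono) auto
    then have "R / q * (obj d p x)^2 \<le> (obj d p a)^2"
      using R0 qp by (simp add: power_mult_distrib)
    then show ?thesis using qp unfolding R_def[symmetric] q_def[symmetric]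
      by (simp add: field_simps mult.commute)
  qed
qed

lemma first_order_real:
  fixes F R L B K :: real
  assumes F: "F > 0" and R: "R > 0" and dl: "\<delta> > 0"
    and h: "\<forall>t. 0 < t \<and> t < \<delta> \<longrightarrow> (F + t*L)^2 * R \<le> F^2 * (R + 2*t*B + t^2*K)"
  shows "L*R \<le> F*B"
proof (rule ccontr)
  assume "\<not> L*R \<le> F*B"
  then have e: "F*(L*R - F*B) > 0" using F by simp
  define e where "e = F*(L*R - F*B)"
  define C where "C = \<bar>L^2*R - F^2*K\<bar> + 1"
  have C: "C > 0" unfolding C_def by simp
  define t where "t = min (\<delta>/2) (e / C)"
  have t0: "t > 0" unfolding t_def using dl e C e_def by simp
  have t1: "t < \<delta>" unfolding t_def using dl by simp
  have tC: "t * C \<le> e" unfolding t_def using C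
    by (metis min.cobounded2 pos_le_divide_eq)
  have "(F + t*L)^2 * R \<le> F^2 * (R + 2*t*B + t^2*K)" using h t0 t1 by blast
  then have "t * (2*e + t*(L^2*R - F^2*K)) \<le> 0"
    unfolding e_def by (simp add: power2_eq_square algebra_simps)
  then have "2*e + t*(L^2*R - F^2*K) \<le> 0" using t0
    by (simp add: mult_le_0_iff)
  moreover have "t*(L^2*R - F^2*K) \<ge> - (t*C)"
  proof -
    have "-(L^2*R - F^2*K) \<le> C" unfolding C_def by linarith
    then have "t * (-(L^2*R - F^2*K)) \<le> t*C" using t0 by (intro mult_left_mono) auto
    then show ?thesis by (simp add: algebra_simps)
  qed
  ultimately show False using tC e e_def by linarith
qed

lemma perturb:
  fixes d g a v :: "nat \<Rightarrow> real"
  assumes max: "is_maximizer d g p a" and p1: "p \<ge> 1"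
    and hd: "\<forall>j\<in>{1..p}. d j > 0"
    and hg: "\<forall>j\<in>{1..p}. g j \<ge> 0"
    and F: "obj d p a > 0" and dl: "\<delta> > 0"
    and h: "\<forall>t. 0 < t \<and> t < \<delta> \<longrightarrow> (\<forall>j\<in>{1..p}. a j + t * v j \<ge> 0)
                 \<and> obj d p (\<lambda>j. a j + t * v j) = obj d p a + t * L"
  shows "L * (\<Sum>j=1..p. (d j)^2 / (d j + g j)) \<le> obj d p a * (\<Sum>j=1..p. (d j + g j) * a j * v j)"
proof -
  define R where "R = (\<Sum>j=1..p. (d j)^2 / (d j + g j))"
  define B where "B = (\<Sum>j=1..p. (d j + g j) * a j * v j)"
  define K where "K = (\<Sum>j=1..p. (d j + g j) * (v j)^2)"
  define Fa where "Fa = obj d p a"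
  have Rp: "R > 0" unfolding R_def
  proof (rule sum_pos)
    show "{1..p} \<noteq> {}" using p1 by simp
    fix i assume "i \<in> {1..p}"
    then have "d i > 0" "g i \<ge> 0" using hd hg by auto
    then show "0 < (d i)^2 / (d i + g i)" by simp
  qed simp
  have feas: "(\<Sum>j=1..p. (d j + g j) * (a j)^2) = R"
    using max unfolding is_maximizer_def feasible_def R_def by blast
  define \<delta>' where "\<delta>' = min \<delta> (Fa / (\<bar>L\<bar> + 1))"
  have dl': "\<delta>' > 0" unfolding \<delta>'_def using dl F Fa_def by simp
  have "L*R \<le> Fa*B"
  proof (rule first_order_real[OF _ Rp dl'])
    show "Fa > 0" using F Fa_def by simp
    show "\<forall>t. 0 < t \<and> t < \<delta>' \<longrightarrow> (Fa + t*L)^2 * R \<le> Fa^2 * (R + 2*t*B + t^2*K)"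
    proof (intro allI impI)
      fix t assume t: "0 < t \<and> t < \<delta>'"
      then have tdl: "t < \<delta>" unfolding \<delta>'_def by simp
      have "t < Fa / (\<bar>L\<bar> + 1)" using t unfolding \<delta>'_def by simp
      then have "t * (\<bar>L\<bar> + 1) < Fa" by (simp add: pos_less_divide_eq)
      then have "t * \<bar>L\<bar> < Fa" using t by (simp add: algebra_simps)
      moreover have "- (t * \<bar>L\<bar>) \<le> t * L" using t
        by (metis abs_ge_minus_self abs_mult abs_of_pos minus_le_iff)
      ultimately have pos: "Fa + t*L \<ge> 0" by linarith
      have hh: "(\<forall>j\<in>{1..p}. a j + t * v j \<ge> 0) \<and> obj d p (\<lambda>j. a j + t * v j) = Fa + t * L"
        using h t tdl Fa_def by blast
      have "(obj d p (\<lambda>j. a j + t * v j))^2 * R \<le> (obj d p a)^2 * (\<Sum>j=1..p. (d j + g j) * (a j + t * v j)^2)"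
        using sq_ineq[OF max p1 hd hg, of "\<lambda>j. a j + t * v j"] hh pos F unfolding R_def Fa_def by simp
      moreover have "(\<Sum>j=1..p. (d j + g j) * (a j + t * v j)^2) = R + 2*t*B + t^2*K"
      proof -
        have "(\<Sum>j=1..p. (d j + g j) * (a j + t * v j)^2)
            = (\<Sum>j=1..p. (d j + g j) * (a j)^2 + 2*t*((d j + g j) * a j * v j) + t^2*((d j + g j) * (v j)^2))"
          by (rule sum.cong) (auto simp: power2_eq_square algebra_simps)
        also have "\<dots> = R + 2*t*B + t^2*K"
          unfolding B_def K_def feas[symmetric] by (simp add: sum.distrib sum_distrib_left)
        finally show ?thesis .
      qed
      ultimately show "(Fa + t*L)^2 * R \<le> Fa^2 * (R + 2*t*B + t^2*K)"
        using hh Fa_def by simp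
    qed
  qed
  then show ?thesis unfolding R_def B_def Fa_def .
qed



lemma Max_eq_at:
  fixes f :: "nat \<Rightarrow> real"
  assumes "j1 \<in> {1..p}" "f j1 = M" "\<forall>j\<in>{1..p}. f j \<le> M"
  shows "Max (f ` {1..p}) = M"
  using assms by (intro Max_eqI) auto

lemma sum_delta_mult:
  fixes f :: "nat \<Rightarrow> real"
  assumes "j0 \<in> A" "finite A"
  shows "(\<Sum>j\<in>A. f j * (if j = j0 then c else 0)) = f j0 * c"
proof -
  have "(\<Sum>j\<in>A. f j * (if j = j0 then c else 0)) = (\<Sum>j\<in>A. (if j = j0 then f j0 * c else 0))"
    by (rule sum.cong) auto
  then show ?thesis using assms by simp
qed

lemma part2:
  fixes d g a :: "nat \<Rightarrow> real" and p \<nu> :: nat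
  assumes hp: "p \<ge> 3"
    and hd: "\<forall>j\<in>{1..p}. d j > 0"
    and hg: "\<forall>j\<in>{1..p}. g j \<ge> 0"
    and hsort: "\<forall>i j. 1 \<le> i \<longrightarrow> i \<le> j \<longrightarrow> j \<le> p \<longrightarrow> rr d g j \<le> rr d g i"
    and max: "is_maximizer d g p a"
    and nu: "\<nu> = Max {j\<in>{1..p}. d j * a j = Max ((\<lambda>i. d i * a i) ` {1..p})}"
    and nu3: "3 \<le> \<nu>" and nup: "\<nu> \<le> p - 1"
  shows "d \<nu> * a \<nu> > d (\<nu>+1) * a (\<nu>+1) \<and> cond d g \<nu> > rr d g (\<nu>+1)
             \<and> (\<forall>k. 3 \<le> k \<and> k < \<nu> \<longrightarrow> \<not> (cond d g k > rr d g (k+1)))"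
proof -
  define I where "I = {1..p}"
  define c where "c j = d j * a j" for j
  define m where "m = Max (c ` I)"
  define T where "T = {j\<in>I. c j = m}"
  define R where "R = (\<Sum>j=1..p. (d j)^2 / (d j + g j))"
  define F where "F = obj d p a"
  define w where "w j = (d j + g j) / (d j)^2" for j
  have p1: "p \<ge> 1" using hp by simp
  have finI: "finite I" "I \<noteq> {}" unfolding I_def using p1 by auto
  have dpos: "\<And>j. j \<in> I \<Longrightarrow> d j > 0" using hd I_def by auto
  have dgpos: "\<And>j. j \<in> I \<Longrightarrow> d j + g j > 0" using hd hg I_def by (simp add: add_pos_nonneg)
  have wpos: "w j > 0" if "j \<in> I" for j unfolding w_def using dpos[OF that] dgpos[OF that] by simp
  have rrw: "rr d g j * w j = 1" if "j \<in> I" for j unfolding w_def rr_def using dpos[OF that] dgpos[OF that]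
    by (simp add: field_simps) (metis distrib_right mult_pos_pos zero_less_power less_irrefl)
  have rrpos: "rr d g j > 0" if "j \<in> I" for j unfolding rr_def using dpos[OF that] dgpos[OF that] by simp
  have Rpos: "R > 0" unfolding R_def
  proof (rule sum_pos)
    show "{1..p} \<noteq> {}" using p1 by simp
    fix i assume "i \<in> {1..p}"
    then have "d i > 0" "g i \<ge> 0" using hd hg by auto
    then show "0 < (d i)^2 / (d i + g i)" by simp
  qed simp
  have feas: "feasible d g p a" using max is_maximizer_def by blast
  have ann: "\<And>j. j \<in> I \<Longrightarrow> a j \<ge> 0" using feas unfolding feasible_def I_def by blast
  have feasR: "(\<Sum>j\<in>I. (d j + g j) * (a j)^2) = R" using feas unfolding feasible_def I_def R_def by blast
  have cnn: "c j \<ge> 0" if "j \<in> I" for j unfolding c_def using ann[OF that] dpos[OF that] by simp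
  have cle: "\<And>j. j \<in> I \<Longrightarrow> c j \<le> m" unfolding m_def using finI by simp
  have min: "m \<in> c ` I" unfolding m_def using finI by simp
  then obtain jm where jm: "jm \<in> I" "c jm = m" by auto
  have Fdef: "F = (\<Sum>j\<in>I. c j) - 2*m" unfolding F_def obj_def c_def m_def I_def by simp
  have objx: "\<And>x. obj d p x = (\<Sum>j\<in>I. d j * x j) - 2 * Max ((\<lambda>j. d j * x j) ` I)"
    unfolding obj_def I_def by simp
  have Fpos: "F > 0"
  proof -
    define x where "x j = 1 / d j" for j
    have xnn: "\<forall>j\<in>{1..p}. x j \<ge> 0" unfolding x_def using hd by (simp add: less_imp_le)
    have qpos: "(\<Sum>j=1..p. (d j + g j) * (x j)^2) > 0"
    proof (rule sum_pos)
      show "{1..p} \<noteq> {}" using p1 by simp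
      fix i assume "i \<in> {1..p}"
      then have iI: "i \<in> I" using I_def by simp
      show "0 < (d i + g i) * (x i)^2" using dpos[OF iI] dgpos[OF iI] x_def by simp
    qed simp
    have dx1: "d j * x j = 1" if "j \<in> I" for j using dpos[OF that] x_def by simp
    have "(\<lambda>j. d j * x j) ` I = (\<lambda>j. 1) ` I"
      by (rule image_cong) (use dx1 in auto)
    then have im: "(\<lambda>j. d j * x j) ` I = {1}" using finI by auto
    have sm: "(\<Sum>j\<in>I. d j * x j) = real p"
    proof -
      have "(\<Sum>j\<in>I. d j * x j) = (\<Sum>j\<in>I. 1)" by (rule sum.cong) (use dx1 in auto)
      then show ?thesis unfolding I_def by simp
    qed
    have ox: "obj d p x = real p - 2" unfolding objx im sm by simp
    have "sqrt (R / (\<Sum>j=1..p. (d j + g j) * (x j)^2)) * obj d p x \<le> F"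
      using homog[OF max p1 hd hg xnn qpos] unfolding R_def F_def .
    moreover have "sqrt (R / (\<Sum>j=1..p. (d j + g j) * (x j)^2)) > 0" using Rpos qpos by simp
    moreover have "obj d p x > 0" using ox hp by simp
    ultimately show ?thesis by (meson less_le_trans mult_pos_pos)
  qed
  have mpos: "m > 0"
  proof -
    have "(\<Sum>j\<in>I. c j) \<le> (\<Sum>j\<in>I. m)" using cle by (rule sum_mono)
    then have "(\<Sum>j\<in>I. c j) \<le> real p * m" unfolding I_def by simp
    then have "F \<le> (real p - 2) * m" using Fdef by (simp add: algebra_simps)
    then show ?thesis using Fpos hp
      by (metis diff_gt_0_iff_gt le_less_trans less_eq_real_def mult_le_0_iff not_less of_nat_numeral of_nat_le_iff numeral_le_iff semiring_norm(72) semiring_norm(76) semiring_norm(79) zero_less_mult_pos le_numeral_extra(1))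
  qed
  define mo where "mo = Max (insert 0 (c ` (I - T)))"
  have mo_lt: "mo < m"
  proof -
    have "mo \<in> insert 0 (c ` (I - T))" unfolding mo_def using finI by (intro Max_in) auto
    moreover have "\<forall>y\<in>insert 0 (c ` (I - T)). y < m"
      using mpos cle unfolding T_def by (auto simp: less_le)
    ultimately show ?thesis by blast
  qed
  have mo_ge: "\<And>j. j \<in> I - T \<Longrightarrow> c j \<le> mo" unfolding mo_def using finI by (intro Max_ge) auto
  have mo0: "mo \<ge> 0" unfolding mo_def using finI by (intro Max_ge) auto
  have Tsub: "T \<subseteq> I" unfolding T_def by auto
  have finT: "finite T" using finI Tsub finite_subset by blast
  have jmT: "jm \<in> T" unfolding T_def using jm by auto
  have cT: "\<And>j. j \<in> T \<Longrightarrow> c j = m" unfolding T_def by auto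
  have cnT: "\<And>j. j \<in> I \<Longrightarrow> j \<notin> T \<Longrightarrow> c j < m" unfolding T_def using cle by (auto simp: less_le)
  note pert = perturb[OF max p1 hd hg, folded R_def I_def, folded F_def]
  have fa: "\<And>j0. j0 \<in> I \<Longrightarrow> j0 \<notin> T \<Longrightarrow> c j0 = R / F * rr d g j0"
  proof -
    fix j0 assume j0: "j0 \<in> I" "j0 \<notin> T"
    define v where "v j = (if j = j0 then 1 else 0::real)" for j
    have B1: "(\<Sum>j\<in>I. (d j + g j) * a j * v j) = (d j0 + g j0) * a j0"
      unfolding v_def using sum_delta_mult[OF j0(1) finI(1)] by simp
    have S1: "(\<Sum>j\<in>I. d j * (a j + t * v j)) = (\<Sum>j\<in>I. c j) + t * d j0" for t
    proof -
      have "(\<Sum>j\<in>I. d j * (a j + t * v j)) = (\<Sum>j\<in>I. c j) + (\<Sum>j\<in>I. (t * d j) * v j)"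
        unfolding c_def by (simp add: sum.distrib algebra_simps)
      also have "(\<Sum>j\<in>I. (t * d j) * v j) = t * d j0"
        unfolding v_def using sum_delta_mult[OF j0(1) finI(1)] by simp
      finally show ?thesis .
    qed
    have "d j0 * R \<le> F * ((d j0 + g j0) * a j0)"
    proof (rule pert[where v=v and \<delta>="(m - mo) / d j0", unfolded B1])
      show "0 < F" by (rule Fpos)
      show "0 < (m - mo) / d j0" using mo_lt dpos j0 by simp
      show "\<forall>t. 0 < t \<and> t < (m - mo) / d j0 \<longrightarrow> (\<forall>j\<in>I. 0 \<le> a j + t * v j) \<and>
              obj d p (\<lambda>j. a j + t * v j) = F + t * d j0"
      proof (intro allI impI conjI)
        fix t assume t: "0 < t \<and> t < (m - mo) / d j0"
        show "\<forall>j\<in>I. 0 \<le> a j + t * v j" using ann t v_def by simp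
        have tt: "t * d j0 < m - mo" using t dpos j0 by (simp add: pos_less_divide_eq)
        have "Max ((\<lambda>j. d j * (a j + t * v j)) ` I) = m"
          unfolding I_def
        proof (rule Max_eq_at)
          show "jm \<in> {1..p}" using jm I_def by simp
          show "d jm * (a jm + t * v jm) = m" using jm j0 jmT v_def c_def by auto
          show "\<forall>j\<in>{1..p}. d j * (a j + t * v j) \<le> m"
          proof
            fix j assume "j \<in> {1..p}"
            then have jI: "j \<in> I" using I_def by simp
            show "d j * (a j + t * v j) \<le> m"
            proof (cases "j = j0")
              case True
              then show ?thesis using mo_ge[of j0] j0 tt unfolding v_def c_def
                by (simp add: algebra_simps)
            next
              case False
              then show ?thesis using cle[OF jI] unfolding v_def c_def by simp
            qed
          qed
        qed
        then show "obj d p (\<lambda>j. a j + t * v j) = F + t * d j0"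
          unfolding objx S1 Fdef by simp
      qed
    qed
    then have ap: "a j0 > 0" using Rpos dpos[OF j0(1)] Fpos dgpos[OF j0(1)] ann[OF j0(1)]
      by (metis less_eq_real_def mult_eq_0_iff mult_pos_pos not_le)
    define v2 where "v2 j = (if j = j0 then -1 else 0::real)" for j
    have B2: "(\<Sum>j\<in>I. (d j + g j) * a j * v2 j) = - ((d j0 + g j0) * a j0)"
      unfolding v2_def using sum_delta_mult[OF j0(1) finI(1)] by simp
    have S2: "(\<Sum>j\<in>I. d j * (a j + t * v2 j)) = (\<Sum>j\<in>I. c j) + t * (- d j0)" for t
    proof -
      have "(\<Sum>j\<in>I. d j * (a j + t * v2 j)) = (\<Sum>j\<in>I. c j) + (\<Sum>j\<in>I. (t * d j) * v2 j)"
        unfolding c_def by (simp add: sum.distrib algebra_simps)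
      also have "(\<Sum>j\<in>I. (t * d j) * v2 j) = t * (- d j0)"
        unfolding v2_def using sum_delta_mult[OF j0(1) finI(1)] by simp
      finally show ?thesis .
    qed
    have "(- d j0) * R \<le> F * (- ((d j0 + g j0) * a j0))"
    proof (rule pert[where v=v2 and \<delta>="a j0", unfolded B2])
      show "0 < F" by (rule Fpos)
      show "0 < a j0" by (rule ap)
      show "\<forall>t. 0 < t \<and> t < a j0 \<longrightarrow> (\<forall>j\<in>I. 0 \<le> a j + t * v2 j) \<and>
              obj d p (\<lambda>j. a j + t * v2 j) = F + t * (- d j0)"
      proof (intro allI impI conjI)
        fix t assume t: "0 < t \<and> t < a j0"
        show "\<forall>j\<in>I. 0 \<le> a j + t * v2 j" using ann t v2_def by simp
        have "Max ((\<lambda>j. d j * (a j + t * v2 j)) ` I) = m"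
          unfolding I_def
        proof (rule Max_eq_at)
          show "jm \<in> {1..p}" using jm I_def by simp
          show "d jm * (a jm + t * v2 jm) = m" using jm j0 jmT v2_def c_def by auto
          show "\<forall>j\<in>{1..p}. d j * (a j + t * v2 j) \<le> m"
          proof
            fix j assume "j \<in> {1..p}"
            then have jI: "j \<in> I" using I_def by simp
            show "d j * (a j + t * v2 j) \<le> m"
            proof (cases "j = j0")
              case True
              have "d j0 * (a j0 - t) \<le> d j0 * a j0" using t dpos[OF j0(1)] by simp
              then show ?thesis using True cle[OF jI] unfolding v2_def c_def by simp
            next
              case False
              then show ?thesis using cle[OF jI] unfolding v2_def c_def by simp
            qed
          qed
        qed
        then show "obj d p (\<lambda>j. a j + t * v2 j) = F + t * (- d j0)"
          unfolding objx S2 Fdef by simp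
      qed
    qed
    with \<open>d j0 * R \<le> F * ((d j0 + g j0) * a j0)\<close>
    have eq: "d j0 * R = F * ((d j0 + g j0) * a j0)" by simp
    have ne: "F * (d j0 + g j0) \<noteq> 0" using Fpos dgpos[OF j0(1)] by simp
    have "d j0 * R / (F * (d j0 + g j0)) = (F * (d j0 + g j0)) * a j0 / (F * (d j0 + g j0))"
      using eq by (simp add: mult.assoc)
    also have "\<dots> = a j0" using ne by simp
    finally have "a j0 = d j0 * R / (F * (d j0 + g j0))" by simp
    then show "c j0 = R / F * rr d g j0"
      unfolding c_def rr_def by (simp add: power2_eq_square)
  qed
  have sumT: "(\<Sum>j\<in>I. (if j \<in> T then f j else 0)) = (\<Sum>j\<in>T. f j)" for f :: "nat \<Rightarrow> real"
  proof -
    have "(\<Sum>j\<in>I. (if j \<in> T then f j else 0)) = (\<Sum>j\<in>I \<inter> T. f j)"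
      using sum.inter_restrict[OF finI(1), of f T] by simp
    also have "I \<inter> T = T" using Tsub by blast
    finally show ?thesis .
  qed
  have aT: "a j = m / d j" if "j \<in> T" for j
  proof -
    have jI: "j \<in> I" using that Tsub by blast
    show ?thesis using cT[OF that] dpos[OF jI] unfolding c_def by (simp add: field_simps)
  qed
  have wT: "(d j + g j) * (a j)^2 = m^2 * w j" if "j \<in> T" for j
    unfolding aT[OF that] w_def by (simp add: power_divide)
  define ST where "ST = (\<Sum>j\<in>T. w j)"
  have STpos: "ST > 0" unfolding ST_def
    by (rule sum_pos[OF finT]) (use jmT wpos Tsub in auto)
  have sumc: "(\<Sum>j\<in>T. c j) = real (card T) * m" using cT by simp
  have fb: "(real (card T) - 2) * R = F * m * ST"
  proof -
    define v where "v j = (if j \<in> T then a j else 0)" for j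
    define v2 where "v2 j = (if j \<in> T then - a j else 0)" for j
    have B1: "(\<Sum>j\<in>I. (d j + g j) * a j * v j) = m^2 * ST"
    proof -
      have "(\<Sum>j\<in>I. (d j + g j) * a j * v j) = (\<Sum>j\<in>I. (if j \<in> T then (d j + g j) * (a j)^2 else 0))"
        unfolding v_def by (rule sum.cong) (auto simp: power2_eq_square)
      also have "\<dots> = (\<Sum>j\<in>T. m^2 * w j)" unfolding sumT using wT by simp
      finally show ?thesis unfolding ST_def by (simp add: sum_distrib_left)
    qed
    have B2: "(\<Sum>j\<in>I. (d j + g j) * a j * v2 j) = - (m^2 * ST)"
    proof -
      have "(\<Sum>j\<in>I. (d j + g j) * a j * v2 j) = (\<Sum>j\<in>I. - (if j \<in> T then (d j + g j) * (a j)^2 else 0))"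
        unfolding v2_def by (rule sum.cong) (auto simp: power2_eq_square)
      also have "\<dots> = - (\<Sum>j\<in>T. m^2 * w j)" unfolding sum_negf sumT using wT by simp
      finally show ?thesis unfolding ST_def by (simp add: sum_distrib_left)
    qed
    have S1: "(\<Sum>j\<in>I. d j * (a j + t * v j)) = (\<Sum>j\<in>I. c j) + t * (real (card T) * m)" for t
    proof -
      have "(\<Sum>j\<in>I. d j * (a j + t * v j)) = (\<Sum>j\<in>I. c j + t * (if j \<in> T then c j else 0))"
        unfolding c_def v_def by (rule sum.cong) (auto simp: algebra_simps)
      also have "\<dots> = (\<Sum>j\<in>I. c j) + t * (\<Sum>j\<in>I. (if j \<in> T then c j else 0))"
        by (simp add: sum.distrib sum_distrib_left)
      finally have "(\<Sum>j\<in>I. d j * (a j + t * v j)) = (\<Sum>j\<in>I. c j) + t * (\<Sum>j\<in>I. (if j \<in> T then c j else 0))" .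
      then show ?thesis unfolding sumT sumc .
    qed
    have S2: "(\<Sum>j\<in>I. d j * (a j + t * v2 j)) = (\<Sum>j\<in>I. c j) - t * (real (card T) * m)" for t
    proof -
      have "(\<Sum>j\<in>I. d j * (a j + t * v2 j)) = (\<Sum>j\<in>I. c j - t * (if j \<in> T then c j else 0))"
        unfolding c_def v2_def by (rule sum.cong) (auto simp: algebra_simps)
      also have "\<dots> = (\<Sum>j\<in>I. c j) - t * (\<Sum>j\<in>I. (if j \<in> T then c j else 0))"
        by (simp add: sum_subtractf sum_distrib_left)
      finally have "(\<Sum>j\<in>I. d j * (a j + t * v2 j)) = (\<Sum>j\<in>I. c j) - t * (\<Sum>j\<in>I. (if j \<in> T then c j else 0))" .
      then show ?thesis unfolding sumT sumc .
    qed
    have i1: "((real (card T) - 2) * m) * R \<le> F * (m^2 * ST)"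
    proof (rule pert[where v=v and \<delta>=1, unfolded B1])
      show "0 < F" by (rule Fpos)
      show "(0::real) < 1" by simp
      show "\<forall>t. 0 < t \<and> t < 1 \<longrightarrow> (\<forall>j\<in>I. 0 \<le> a j + t * v j) \<and>
              obj d p (\<lambda>j. a j + t * v j) = F + t * ((real (card T) - 2) * m)"
      proof (intro allI impI conjI)
        fix t :: real assume t: "0 < t \<and> t < 1"
        show "\<forall>j\<in>I. 0 \<le> a j + t * v j" using ann t v_def by simp
        have "Max ((\<lambda>j. d j * (a j + t * v j)) ` I) = (1 + t) * m"
          unfolding I_def
        proof (rule Max_eq_at)
          show "jm \<in> {1..p}" using jm I_def by simp
          show "d jm * (a jm + t * v jm) = (1 + t) * m" using jm jmT v_def c_def by (auto simp: algebra_simps)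
          show "\<forall>j\<in>{1..p}. d j * (a j + t * v j) \<le> (1 + t) * m"
          proof
            fix j assume "j \<in> {1..p}"
            then have jI: "j \<in> I" using I_def by simp
            show "d j * (a j + t * v j) \<le> (1 + t) * m"
            proof (cases "j \<in> T")
              case True
              then show ?thesis using cT[OF True] unfolding v_def c_def by (simp add: algebra_simps)
            next
              case False
              have "m \<le> (1 + t) * m" using t mpos by (simp add: algebra_simps)
              then show ?thesis using False cle[OF jI] unfolding v_def c_def by simp
            qed
          qed
        qed
        then show "obj d p (\<lambda>j. a j + t * v j) = F + t * ((real (card T) - 2) * m)"
          unfolding objx S1 Fdef by (simp add: algebra_simps)
      qed
    qed
    define \<delta> where "\<delta> = min 1 ((m - mo) / m)"
    have i2: "(- ((real (card T) - 2) * m)) * R \<le> F * (- (m^2 * ST))"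
    proof (rule pert[where v=v2 and \<delta>=\<delta>, unfolded B2])
      show "0 < F" by (rule Fpos)
      show "0 < \<delta>" unfolding \<delta>_def using mo_lt mpos by simp
      show "\<forall>t. 0 < t \<and> t < \<delta> \<longrightarrow> (\<forall>j\<in>I. 0 \<le> a j + t * v2 j) \<and>
              obj d p (\<lambda>j. a j + t * v2 j) = F + t * (- ((real (card T) - 2) * m))"
      proof (intro allI impI conjI)
        fix t :: real assume t: "0 < t \<and> t < \<delta>"
        have t1: "t < 1" using t \<delta>_def by simp
        have "t < (m - mo) / m" using t \<delta>_def by simp
        then have tm: "t * m < m - mo" using mpos by (simp add: pos_less_divide_eq)
        show "\<forall>j\<in>I. 0 \<le> a j + t * v2 j"
        proof
          fix j assume jI: "j \<in> I"
          have "0 \<le> (1 - t) * a j" using ann[OF jI] t1 by simp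
          then show "0 \<le> a j + t * v2 j" using ann[OF jI] unfolding v2_def by (simp add: algebra_simps)
        qed
        have "Max ((\<lambda>j. d j * (a j + t * v2 j)) ` I) = (1 - t) * m"
          unfolding I_def
        proof (rule Max_eq_at)
          show "jm \<in> {1..p}" using jm I_def by simp
          show "d jm * (a jm + t * v2 jm) = (1 - t) * m" using jm jmT v2_def c_def by (auto simp: algebra_simps)
          show "\<forall>j\<in>{1..p}. d j * (a j + t * v2 j) \<le> (1 - t) * m"
          proof
            fix j assume "j \<in> {1..p}"
            then have jI: "j \<in> I" using I_def by simp
            show "d j * (a j + t * v2 j) \<le> (1 - t) * m"
            proof (cases "j \<in> T")
              case True
              then show ?thesis using cT[OF True] unfolding v2_def c_def by (simp add: algebra_simps)
            next
              case False
              then have "c j \<le> mo" using mo_ge jI by blast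
              then show ?thesis using False tm unfolding v2_def c_def by (simp add: algebra_simps)
            qed
          qed
        qed
        then show "obj d p (\<lambda>j. a j + t * v2 j) = F + t * (- ((real (card T) - 2) * m))"
          unfolding objx S2 Fdef by (simp add: algebra_simps)
      qed
    qed
    have "((real (card T) - 2) * m) * R = F * (m^2 * ST)" using i1 i2 by simp
    then have "m * ((real (card T) - 2) * R) = m * (F * m * ST)" by (simp add: power2_eq_square algebra_simps)
    then show ?thesis using mpos by simp
  qed
  have cardT: "card T > 2"
  proof -
    have "F * m * ST > 0" using Fpos mpos STpos by simp
    then have "(real (card T) - 2) * R > 0" using fb by simp
    then have "real (card T) - 2 > 0" using Rpos by (simp add: zero_less_mult_iff)
    then show ?thesis by simp
  qed
  have fc: "F * m * w j0 \<le> R" if j0: "j0 \<in> T" for j0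
  proof -
    have j0I: "j0 \<in> I" using j0 Tsub by blast
    obtain j1 where j1: "j1 \<in> T" "j1 \<noteq> j0"
    proof -
      have "\<not> T \<subseteq> {j0}"
      proof
        assume "T \<subseteq> {j0}"
        then have "card T \<le> card {j0}" by (intro card_mono) auto
        then show False using cardT by simp
      qed
      then show ?thesis using that by blast
    qed
    have j1I: "j1 \<in> I" using j1 Tsub by blast
    define v where "v j = (if j = j0 then - a j0 else 0)" for j
    have B: "(\<Sum>j\<in>I. (d j + g j) * a j * v j) = - (m^2 * w j0)"
    proof -
      have "(\<Sum>j\<in>I. (d j + g j) * a j * v j) = (\<Sum>j\<in>I. ((d j + g j) * a j) * (if j = j0 then - a j0 else 0))"
        unfolding v_def by simp
      also have "\<dots> = (d j0 + g j0) * a j0 * (- a j0)" by (rule sum_delta_mult[OF j0I finI(1)])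
      also have "\<dots> = - ((d j0 + g j0) * (a j0)^2)" by (simp add: power2_eq_square)
      finally show ?thesis using wT[OF j0] by simp
    qed
    have S: "(\<Sum>j\<in>I. d j * (a j + t * v j)) = (\<Sum>j\<in>I. c j) + t * (- m)" for t
    proof -
      have "(\<Sum>j\<in>I. d j * (a j + t * v j)) = (\<Sum>j\<in>I. c j) + (\<Sum>j\<in>I. (t * d j) * (if j = j0 then - a j0 else 0))"
        unfolding c_def v_def by (simp add: sum.distrib algebra_simps)
      also have "(\<Sum>j\<in>I. (t * d j) * (if j = j0 then - a j0 else 0)) = t * d j0 * (- a j0)"
        by (rule sum_delta_mult[OF j0I finI(1)])
      also have "\<dots> = t * (- m)" using cT[OF j0] unfolding c_def by simp
      finally show ?thesis .
    qed
    have "(- m) * R \<le> F * (- (m^2 * w j0))"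
    proof (rule pert[where v=v and \<delta>=1, unfolded B])
      show "0 < F" by (rule Fpos)
      show "(0::real) < 1" by simp
      show "\<forall>t. 0 < t \<and> t < 1 \<longrightarrow> (\<forall>j\<in>I. 0 \<le> a j + t * v j) \<and>
              obj d p (\<lambda>j. a j + t * v j) = F + t * (- m)"
      proof (intro allI impI conjI)
        fix t :: real assume t: "0 < t \<and> t < 1"
        show "\<forall>j\<in>I. 0 \<le> a j + t * v j"
        proof
          fix j assume jI: "j \<in> I"
          have "0 \<le> (1 - t) * a j" using ann[OF jI] t by simp
          then show "0 \<le> a j + t * v j" using ann[OF jI] unfolding v_def by (auto simp: algebra_simps)
        qed
        have "Max ((\<lambda>j. d j * (a j + t * v j)) ` I) = m"
          unfolding I_def
        proof (rule Max_eq_at)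
          show "j1 \<in> {1..p}" using j1I I_def by simp
          show "d j1 * (a j1 + t * v j1) = m" using j1 cT v_def c_def by auto
          show "\<forall>j\<in>{1..p}. d j * (a j + t * v j) \<le> m"
          proof
            fix j assume "j \<in> {1..p}"
            then have jI: "j \<in> I" using I_def by simp
            show "d j * (a j + t * v j) \<le> m"
            proof (cases "j = j0")
              case True
              have "(1 - t) * m \<le> m" using t mpos by (simp add: algebra_simps)
              then show ?thesis using True cT[OF j0] unfolding v_def c_def by (simp add: algebra_simps)
            next
              case False
              then show ?thesis using cle[OF jI] unfolding v_def c_def by simp
            qed
          qed
        qed
        then show "obj d p (\<lambda>j. a j + t * v j) = F + t * (- m)"
          unfolding objx S Fdef by (simp add: algebra_simps)
      qed
    qed
    then have "m * (F * m * w j0) \<le> m * R" by (simp add: power2_eq_square algebra_simps)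
    then show ?thesis using mpos by simp
  qed
  define s where "s = R / F"
  define u where "u = m * F / R"
  have spos: "s > 0" unfolding s_def using Rpos Fpos by simp
  have upos: "u > 0" unfolding u_def using Rpos Fpos mpos by simp
  have msu: "m = s * u" unfolding s_def u_def using Rpos Fpos by simp
  have fa': "c j = s * rr d g j" if "j \<in> I" "j \<notin> T" for j using fa[OF that] s_def by simp
  have fcw: "u * w j \<le> 1" if "j \<in> T" for j
  proof -
    have "F * m * w j / R \<le> 1" using fc[OF that] Rpos by simp
    then show ?thesis unfolding u_def by (simp add: algebra_simps)
  qed
  have fc': "u \<le> rr d g j" if "j \<in> T" for j
  proof -
    have jI: "j \<in> I" using that Tsub by blast
    have "u * w j \<le> rr d g j * w j" using fcw[OF that] rrw[OF jI] by simp
    then show ?thesis using wpos[OF jI] by simp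
  qed
  have Tset: "T = {j\<in>{1..p}. d j * a j = Max ((\<lambda>i. d i * a i) ` {1..p})}"
    unfolding T_def I_def c_def m_def by simp
  have nuT: "\<nu> = Max T" using nu Tset by simp
  have nuinT: "\<nu> \<in> T" unfolding nuT using finT jmT by (intro Max_in) auto
  have Tle: "j \<le> \<nu>" if "j \<in> T" for j unfolding nuT using finT that by simp
  have nuI: "\<nu> \<in> I" using nuinT Tsub by blast
  have Teq: "T = {1..\<nu>}"
  proof
    show "T \<subseteq> {1..\<nu>}" using Tle Tsub I_def by auto
    show "{1..\<nu>} \<subseteq> T"
    proof
      fix j assume j: "j \<in> {1..\<nu>}"
      then have jI: "j \<in> I" using nup I_def by auto
      show "j \<in> T"
      proof (rule ccontr)
        assume nj: "j \<notin> T"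
        have "rr d g \<nu> \<le> rr d g j" using hsort j nup by auto
        then have "s * u \<le> s * rr d g j" using fc'[OF nuinT] spos by (intro mult_left_mono) auto
        then have "m \<le> c j" using fa'[OF jI nj] msu by simp
        then show False using cnT[OF jI nj] by simp
      qed
    qed
  qed
  define Sf where "Sf k = (\<Sum>j=1..k. w j)" for k
  have condS: "cond d g k = (real k - 2) / Sf k" for k unfolding cond_def Sf_def w_def by simp
  have Snu: "real \<nu> - 2 = u * Sf \<nu>"
  proof -
    have "(real \<nu> - 2) * R = F * m * Sf \<nu>" using fb unfolding Teq ST_def Sf_def by simp
    then show ?thesis unfolding u_def using Rpos by (simp add: field_simps)
  qed
  have Spos: "Sf k > 0" if "1 \<le> k" "k \<le> p" for k unfolding Sf_def
    by (rule sum_pos) (use that wpos I_def in auto)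
  have n1I: "\<nu> + 1 \<in> I" using nup nu3 I_def by auto
  have n1T: "\<nu> + 1 \<notin> T" using Tle by fastforce
  have Sn: "Sf \<nu> > 0" using Spos[of \<nu>] nu3 nup by simp
  have A: "cond d g \<nu> > rr d g (\<nu>+1)"
  proof -
    have "s * rr d g (\<nu>+1) < s * u" using fa'[OF n1I n1T] cnT[OF n1I n1T] msu by simp
    then have "rr d g (\<nu>+1) < u" using spos by simp
    also have "u = (real \<nu> - 2) / Sf \<nu>" using Snu Sn by (simp add: field_simps)
    finally show ?thesis unfolding condS .
  qed
  have A0: "d \<nu> * a \<nu> > d (\<nu>+1) * a (\<nu>+1)"
    using cT[OF nuinT] cnT[OF n1I n1T] unfolding c_def by simp
  have B: "\<not> (cond d g k > rr d g (k+1))" if k: "3 \<le> k" "k < \<nu>" for k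
  proof -
    have split: "Sf \<nu> = Sf k + (\<Sum>j=k+1..\<nu>. w j)"
    proof -
      have "Sf (k + (\<nu> - k)) = Sf k + (\<Sum>j=k+1..k + (\<nu> - k). w j)"
        unfolding Sf_def by (rule sum.ub_add_nat) simp
      then show ?thesis using k by simp
    qed
    have "(\<Sum>j=k+1..\<nu>. u * w j) \<le> (\<Sum>j=k+1..\<nu>. 1)"
      by (rule sum_mono) (use fcw Teq in auto)
    then have "u * (\<Sum>j=k+1..\<nu>. w j) \<le> real \<nu> - real k" using k by (simp add: sum_distrib_left of_nat_diff)
    then have "real \<nu> - 2 \<le> u * Sf k + (real \<nu> - real k)" using Snu split by (simp add: algebra_simps)
    then have h1: "real k - 2 \<le> u * Sf k" by simp
    have k1T: "k + 1 \<in> T" using Teq k by auto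
    have Skp: "Sf k > 0" using Spos[of k] k nup by simp
    have "u * Sf k \<le> rr d g (k+1) * Sf k" using fc'[OF k1T] Skp by simp
    then have "real k - 2 \<le> rr d g (k+1) * Sf k" using h1 by simp
    then have "(real k - 2) / Sf k \<le> rr d g (k+1)" using Skp by (simp add: divide_le_eq)
    then show ?thesis unfolding condS by simp
  qed
  show ?thesis using A A0 B by blast
qed



theorem corollary2:
  fixes d g :: "nat \<Rightarrow> real" and p :: nat
  assumes hp: "p \<ge> 3"
    and hd: "\<forall>j\<in>{1..p}. d j > 0"
    and hg: "\<forall>j\<in>{1..p}. g j \<ge> 0"
    and hsort: "\<forall>i j. 1 \<le> i \<longrightarrow> i \<le> j \<longrightarrow> j \<le> p \<longrightarrow> rr d g j \<le> rr d g i"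
  shows "(\<forall>k. 3 \<le> k \<and> k \<le> p - 1 \<longrightarrow>
            Mk d g p k \<ge> Mk d g p (k+1) \<and>
            (Mk d g p k = Mk d g p (k+1) \<longleftrightarrow> cond d g k = rr d g (k+1)))
       \<and> (\<forall>a \<nu>. is_maximizer d g p a
             \<and> (\<forall>b. is_maximizer d g p b \<longrightarrow> (\<forall>j\<in>{1..p}. b j = a j))
             \<and> \<nu> = Max {j\<in>{1..p}. d j * a j = Max ((\<lambda>i. d i * a i) ` {1..p})}
             \<and> 3 \<le> \<nu> \<and> \<nu> \<le> p - 1
           \<longrightarrow> (d \<nu> * a \<nu> > d (\<nu>+1) * a (\<nu>+1) \<longleftrightarrow> cond d g \<nu> > rr d g (\<nu>+1))
             \<and> cond d g \<nu> > rr d g (\<nu>+1)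
             \<and> (\<forall>k. 3 \<le> k \<and> k < \<nu> \<longrightarrow> \<not> (cond d g k > rr d g (k+1)))
             \<and> Mk d g p \<nu> > Mk d g p (\<nu>+1))"
  proof -
  have P1: "\<forall>k. 3 \<le> k \<and> k \<le> p - 1 \<longrightarrow>
            Mk d g p k \<ge> Mk d g p (k+1) \<and>
            (Mk d g p k = Mk d g p (k+1) \<longleftrightarrow> cond d g k = rr d g (k+1))"
    using part1[OF _ _ hd hg] by blast
  show ?thesis
  proof (rule conjI[OF P1], intro allI impI)
    fix a \<nu>
    assume H: "is_maximizer d g p a
             \<and> (\<forall>b. is_maximizer d g p b \<longrightarrow> (\<forall>j\<in>{1..p}. b j = a j))
             \<and> \<nu> = Max {j\<in>{1..p}. d j * a j = Max ((\<lambda>i. d i * a i) ` {1..p})}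
             \<and> 3 \<le> \<nu> \<and> \<nu> \<le> p - 1"
    have R: "d \<nu> * a \<nu> > d (\<nu>+1) * a (\<nu>+1) \<and> cond d g \<nu> > rr d g (\<nu>+1)
             \<and> (\<forall>k. 3 \<le> k \<and> k < \<nu> \<longrightarrow> \<not> (cond d g k > rr d g (k+1)))"
      using part2[OF hp hd hg hsort] H by blast
    have M: "Mk d g p \<nu> \<ge> Mk d g p (\<nu>+1) \<and>
            (Mk d g p \<nu> = Mk d g p (\<nu>+1) \<longleftrightarrow> cond d g \<nu> = rr d g (\<nu>+1))"
      using P1 H by blast
    show "(d \<nu> * a \<nu> > d (\<nu>+1) * a (\<nu>+1) \<longleftrightarrow> cond d g \<nu> > rr d g (\<nu>+1))
             \<and> cond d g \<nu> > rr d g (\<nu>+1)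
             \<and> (\<forall>k. 3 \<le> k \<and> k < \<nu> \<longrightarrow> \<not> (cond d g k > rr d g (k+1)))
             \<and> Mk d g p \<nu> > Mk d g p (\<nu>+1)"
      using R M by auto
  qed
qed

end
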